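(* For every integer $N\ge 2$, the set $W_N\subset\mathbb R^{N-1}$ is homeomorphic to the closed unit ball $B^{N-1}=\{\mathbf x\in\mathbb R^{N-1}:\|\mathbf x\|\le 1\}$.
   Context: Let $N\ge 2$ be an integer and $\mathbb T=\{z\in\mathbb C:|z|=1\}$. For $\mathbf a=(a_1,\dots,a_{N-1})\in\mathbb R^{N-1}$ define $\mathbf c=(c_1,\dots,c_{N-1})\in\mathbb C^{N-1}$ by $c_j=\frac{\sqrt2}{2}(a_j+i\,a_{N-j})$ for $1\le j<N/2$, $c_{N/2}=a_{N/2}$ (only when $N$ is even), and $c_j=\frac{\sqrt2}{2}(a_{N-j}-i\,a_j)$ for $N/2<j\le N-1$ (so $c_{N-j}=\overline{c_j}$ and $\|\mathbf c\|=\|\mathbf a\|$). Associate to $\mathbf a$ the monic polynomial $\mathbf a(x)=x^N+\sum_{n=1}^{N-1}c_nx^{N-n}+1$. Define $W_N=\{\mathbf a\in\mathbb R^{N-1}:\text{all roots of }\mathbf a(x)\text{ lie in }\mathbb T\}$, with the subspace topology and Euclidean metric from $\mathbb R^{N-1}$. *)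

theory Defs
  imports "HOL-Analysis.Analysis"
begin

definition cvec :: "nat \<Rightarrow> (nat \<Rightarrow> real) \<Rightarrow> nat \<Rightarrow> complex" where
  "cvec N a j =
     (if 2 * j < N then complex_of_real (sqrt 2 / 2) * (complex_of_real (a j) + \<i> * complex_of_real (a (N - j)))
      else if 2 * j = N then complex_of_real (a j)
      else complex_of_real (sqrt 2 / 2) * (complex_of_real (a (N - j)) - \<i> * complex_of_real (a j)))"

definition apoly :: "nat \<Rightarrow> (nat \<Rightarrow> real) \<Rightarrow> complex \<Rightarrow> complex" where
  "apoly N a x = x ^ N + (\<Sum>n = 1..N - 1. cvec N a n * x ^ (N - n)) + 1"

text \<open>W_N inside R^(N-1), realised as real^'n where the coordinate with index j in {1..N-1}
  is the component at e j, for a fixed bijection e from {1..N-1} onto the index type.\<close>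
definition W :: "nat \<Rightarrow> (nat \<Rightarrow> 'n::finite) \<Rightarrow> (real ^ 'n) set" where
  "W N e = {x. \<forall>z. apoly N (\<lambda>j. x $ e j) z = 0 \<longrightarrow> cmod z = 1}"

end

theory Submission
  imports Defs "HOL-Computational_Algebra.Fundamental_Theorem_Algebra" "HOL-Library.Real_Mod"
begin

definition lin :: "complex \<Rightarrow> complex poly" where "lin z = [:-z, 1:]"
definition PM :: "complex multiset \<Rightarrow> complex poly" where
  "PM M = prod_mset (image_mset lin M)"

lemma PM_empty[simp]: "PM {#} = 1" by (simp add: PM_def)
lemma PM_add[simp]: "PM (add_mset z M) = lin z * PM M" by (simp add: PM_def)

lemma lin_nz[simp]: "lin z \<noteq> 0" by (simp add: lin_def)
lemma PM_nz: "PM M \<noteq> 0" by (induction M) auto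
lemma degree_lin[simp]: "degree (lin z) = 1" by (simp add: lin_def)
lemma lead_lin[simp]: "coeff (lin z) (Suc 0) = 1" by (simp add: lin_def)
lemma coeff0_lin[simp]: "coeff (lin z) 0 = - z" by (simp add: lin_def)
lemma proots_lin[simp]: "proots (lin z) = {#z#}"
  unfolding lin_def using proots_linear_factor[of "-z"] by simp

lemma proots_PM: "proots (PM M) = M"
  by (induction M) (auto simp: proots_mult PM_nz)

lemma degree_PM: "degree (PM M) = size M"
  by (induction M) (auto simp: degree_mult_eq PM_nz)

lemma lead_PM: "coeff (PM M) (size M) = 1"
proof -
  have "lead_coeff (PM M) = 1"
    by (induction M) (auto simp: lead_coeff_mult)
  then show ?thesis by (simp add: degree_PM)
qed

lemma coeff0_PM: "coeff (PM M) 0 = prod_mset (image_mset uminus M)"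
  by (induction M) (auto simp: coeff_mult_0)

lemma map_poly_cnj_mult: "map_poly cnj (p * q) = map_poly cnj p * map_poly cnj (q :: complex poly)"
  by (rule poly_eq_poly_eq_iff[THEN iffD1]) (auto simp: fun_eq_iff)

lemma reflect_PM:
  assumes "\<forall>z\<in>#M. cmod z = 1"
  shows "reflect_poly (PM M) = smult (prod_mset (image_mset uminus M)) (map_poly cnj (PM M))"
  using assms
proof (induction M)
  case empty
  then show ?case by simp
next
  case (add z M)
  have z: "z * cnj z = 1" using add.prems
    by (simp add: complex_norm_square[symmetric])
  have r: "reflect_poly (lin z) = smult (- z) (map_poly cnj (lin z))"
  proof -
    have z0: "z \<noteq> 0" using add.prems by auto
    have "reflect_poly (lin z) = [:1, -z:]"
      using z0 by (simp add: lin_def reflect_poly_pCons)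
    moreover have "map_poly cnj (lin z) = [:-cnj z, 1:]"
      by (simp add: lin_def map_poly_pCons)
    ultimately show ?thesis using z by (simp add: algebra_simps)
  qed
  show ?case using add
    by (simp add: reflect_poly_mult map_poly_cnj_mult r mult_ac)
qed

lemma PM_selfinv:
  assumes "\<forall>z\<in>#M. cmod z = 1" "prod_mset (image_mset uminus M) = 1" "n \<le> size M"
  shows "coeff (PM M) (size M - n) = cnj (coeff (PM M) n)"
proof -
  have "coeff (reflect_poly (PM M)) n = coeff (PM M) (size M - n)"
    using assms(3) by (simp add: coeff_reflect_poly degree_PM)
  moreover have "coeff (reflect_poly (PM M)) n = cnj (coeff (PM M) n)"
    using reflect_PM[OF assms(1)] assms(2) by (simp add: coeff_map_poly)
  ultimately show ?thesis by simp
qed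

lemma poly_sum_N:
  fixes p :: "complex poly"
  assumes "degree p \<le> N"
  shows "poly p x = (\<Sum>i\<le>N. coeff p i * x ^ i)"
proof -
  have "poly p x = (\<Sum>i\<le>degree p. coeff p i * x ^ i)" by (rule poly_altdef)
  also have "\<dots> = (\<Sum>i\<le>N. coeff p i * x ^ i)"
    by (rule sum.mono_neutral_left) (use assms in \<open>auto simp: coeff_eq_0\<close>)
  finally show ?thesis .
qed

lemma apoly_eq_poly:
  assumes "N \<ge> 1" "degree p \<le> N" "coeff p 0 = 1" "coeff p N = 1"
    "\<forall>n\<in>{1..N-1}. cvec N a n = coeff p (N-n)"
  shows "apoly N a x = poly p x"
proof -
  have set: "{..N} = insert 0 (insert N {1..N-1})" using assms(1) by auto
  have mid: "(\<Sum>i\<in>{1..N-1}. coeff p i * x ^ i) = (\<Sum>n\<in>{1..N-1}. cvec N a n * x ^ (N - n))"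
  proof (rule sum.reindex_bij_witness[of _ "\<lambda>n. N-n" "\<lambda>n. N-n"])
    fix n assume n: "n \<in> {1..N-1}"
    then show "N - (N - n) = n" "N - n \<in> {1..N-1}" by auto
    have "N - n \<in> {1..N-1}" using n by auto
    then have "cvec N a (N - n) = coeff p (N - (N - n))" using assms(5) by blast
    moreover have "N - (N - n) = n" using n by auto
    ultimately show "cvec N a (N - n) * x ^ (N - (N - n)) = coeff p n * x ^ n" by simp
  qed auto
  have "poly p x = (\<Sum>i\<le>N. coeff p i * x ^ i)" by (rule poly_sum_N[OF assms(2)])
  also have "\<dots> = coeff p 0 + (coeff p N * x ^ N + (\<Sum>i\<in>{1..N-1}. coeff p i * x ^ i))"
    unfolding set using assms(1) by (simp add: sum.insert)
  finally show ?thesis using assms mid by (simp add: apoly_def)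
qed

lemma exists_poly:
  assumes "N \<ge> 1"
  shows "\<exists>p. degree p = N \<and> coeff p 0 = 1 \<and> coeff p N = 1 \<and> (\<forall>n\<in>{1..N-1}. coeff p (N-n) = cvec N a n)"
proof -
  define cf where "cf i = (if i = 0 \<or> i = N then 1 else cvec N a (N - i))" for i
  define p where "p = (\<Sum>i\<le>N. monom (cf i) i)"
  have c: "coeff p k = (if k \<le> N then cf k else 0)" for k
    unfolding p_def by (simp add: coeff_sum coeff_monom)
  have "degree p \<le> N" by (rule degree_le) (auto simp: c)
  moreover have "degree p \<ge> N" by (rule le_degree) (simp add: c cf_def)
  ultimately show ?thesis using assms
    by (intro exI[of _ p]) (auto simp: c cf_def)
qed

definition Avec :: "nat \<Rightarrow> (nat \<Rightarrow> complex) \<Rightarrow> nat \<Rightarrow> real" where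
  "Avec N c j = (if 2*j < N then sqrt 2 * Re (c j) else if 2*j = N then Re (c j)
     else sqrt 2 * Im (c (N-j)))"

lemma cvec_cong:
  assumes "\<forall>j\<in>{1..N-1}. a j = b j" "n \<in> {1..N-1}"
  shows "cvec N a n = cvec N b n"
proof -
  have "N - n \<in> {1..N-1}" using assms(2) by auto
  then show ?thesis using assms by (simp add: cvec_def)
qed

lemma sqrt2_sq: "sqrt 2 * sqrt 2 = (2::real)" by simp

lemma half_sqrt2: "sqrt 2 / 2 * (sqrt 2 * x) = (x::real)"
  by (simp add: field_simps)

lemma helper1: "complex_of_real (sqrt 2 / 2) * (complex_of_real (sqrt 2 * x) + \<i> * complex_of_real (sqrt 2 * y)) = Complex x y"
  by (simp add: complex_eq_iff half_sqrt2)

lemma helper2: "complex_of_real (sqrt 2 / 2) * (complex_of_real (sqrt 2 * x) - \<i> * complex_of_real (sqrt 2 * y)) = Complex x (-y)"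
  by (simp add: complex_eq_iff half_sqrt2)

lemma Avec_cvec:
  assumes "j \<in> {1..N-1}"
  shows "Avec N (cvec N a) j = a j"
proof -
  consider "2*j < N" | "2*j = N" | "2*j > N" by linarith
  then show ?thesis
  proof cases
    case 1
    then have "cvec N a j = Complex (sqrt 2 / 2 * a j) (sqrt 2 / 2 * a (N-j))"
      by (simp add: cvec_def complex_eq_iff)
    then show ?thesis using 1 by (simp add: Avec_def)
  next
    case 2
    then show ?thesis by (simp add: Avec_def cvec_def)
  next
    case 3
    then have "2 * (N - j) < N" "N - (N - j) = j" using assms by auto
    then have "cvec N a (N-j) = Complex (sqrt 2 / 2 * a (N-j)) (sqrt 2 / 2 * a j)"
      by (simp add: cvec_def complex_eq_iff)
    then show ?thesis using 3 by (simp add: Avec_def)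
  qed
qed

lemma cvec_Avec:
  assumes "\<forall>n\<in>{1..N-1}. c (N-n) = cnj (c n)" "n \<in> {1..N-1}"
  shows "cvec N (Avec N c) n = c n"
proof -
  have mir: "c (N-n) = cnj (c n)" using assms by blast
  consider "2*n < N" | "2*n = N" | "2*n > N" by linarith
  then show ?thesis
  proof cases
    case 1
    then have "\<not> 2 * (N - n) < N" "2 * (N - n) \<noteq> N" "N - (N - n) = n" using assms by auto
    then have "Avec N c (N - n) = sqrt 2 * Im (c n)" by (simp add: Avec_def)
    moreover have "Avec N c n = sqrt 2 * Re (c n)" using 1 by (simp add: Avec_def)
    ultimately have "cvec N (Avec N c) n = Complex (Re (c n)) (Im (c n))"
      by (simp only: cvec_def if_P[OF 1] helper1)
    then show ?thesis by simp
  next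
    case 2
    then have "N - n = n" by auto
    then have "c n = cnj (c n)" using mir by simp
    then have "Im (c n) = Im (cnj (c n))" by simp
    then have "Im (c n) = 0" by simp
    then show ?thesis using 2 by (simp add: Avec_def cvec_def complex_eq_iff)
  next
    case 3
    then have "2 * (N - n) < N" using assms by auto
    then have "Avec N c (N - n) = sqrt 2 * Re (c (N - n))" by (simp add: Avec_def)
    moreover have "Avec N c n = sqrt 2 * Im (c (N - n))" using 3 by (simp add: Avec_def)
    moreover have "\<not> 2 * n < N" "2 * n \<noteq> N" using 3 by auto
    ultimately have "cvec N (Avec N c) n = Complex (Re (c (N - n))) (- Im (c (N - n)))"
      by (simp only: cvec_def if_False helper2)
    then have "cvec N (Avec N c) n = cnj (c (N - n))" by (simp add: complex_eq_iff)
    then show ?thesis using mir by simp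
  qed
qed


definition RM :: "nat \<Rightarrow> (nat \<Rightarrow> real) \<Rightarrow> complex multiset" where
  "RM N w = (\<Sum>k<N. {# cis (2*pi*w k) #})"

definition win :: "nat \<Rightarrow> (nat \<Rightarrow> real) \<Rightarrow> bool" where
  "win N w \<longleftrightarrow> (\<forall>i j. i \<le> j \<longrightarrow> j < N \<longrightarrow> w i \<le> w j) \<and> w (N-1) \<le> w 0 + 1"

lemma image_sum_single: "image_mset h (\<Sum>k<(N::nat). {#f k#}) = (\<Sum>k<N. {#h (f k)#})"
  by (induction N) auto

lemma sum_mset_sum_single: "sum_mset (\<Sum>k<(N::nat). {#f k#}) = (\<Sum>k<N. (f k :: real))"
  by (induction N) auto

lemma prod_mset_sum_single: "prod_mset (\<Sum>k<(N::nat). {#f k#}) = (\<Prod>k<N. (f k :: complex))"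
  by (induction N) auto

lemma PM_sum_single: "PM (\<Sum>k<(N::nat). {#f k#}) = (\<Prod>k<N. lin (f k))"
  by (induction N) (auto simp: PM_def)

lemma size_sum_single: "size (\<Sum>k<(N::nat). {#f k#}) = N"
  by (induction N) auto

lemma in_sum_single: "z \<in># (\<Sum>k<(N::nat). {#f k#}) \<Longrightarrow> \<exists>k<N. z = f k"
  by (induction N) (auto simp: less_Suc_eq)

lemma RM_norm: "z \<in># RM N w \<Longrightarrow> cmod z = 1"
  unfolding RM_def by (drule in_sum_single) auto

lemma size_RM[simp]: "size (RM N w) = N"
  by (simp add: RM_def size_sum_single)

definition phi :: "complex \<Rightarrow> real" where "phi z = Arg z / (2*pi)"

lemma cis_eq_shift:
  assumes "cis a = cis b"
  shows "\<exists>n::int. a = b + 2*pi*n"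
proof -
  have "cis (a - b) = 1" using assms by (simp add: cis_divide[symmetric])
  then obtain n where "a - b = of_int n * (2*pi)" using cis_eq_1_iff by blast
  then show ?thesis by (intro exI[of _ n]) (simp add: algebra_simps)
qed

lemma cis_phi: "cmod z = 1 \<Longrightarrow> cis (2*pi*phi z) = z"
proof -
  assume "cmod z = 1"
  then have "z \<noteq> 0" by auto
  then have "cis (Arg z) = z" using \<open>cmod z = 1\<close> by (simp add: cis_Arg sgn_div_norm)
  then show ?thesis by (simp add: phi_def)
qed

lemma phi_cis: "\<exists>n::int. phi (cis (2*pi*t)) = t + n"
proof -
  have "cis (2*pi*phi (cis (2*pi*t))) = cis (2*pi*t)" by (rule cis_phi) simp
  then obtain n::int where "2*pi*phi (cis (2*pi*t)) = 2*pi*t + 2*pi*n" using cis_eq_shift by blast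
  then have "phi (cis (2*pi*t)) = t + n" 
    by (metis distrib_left mult_cancel_left pi_neq_zero zero_neq_numeral mult_eq_0_iff)
  then show ?thesis by blast
qed

lemma H_cis: "of_int \<lfloor>y - phi (cis (2*pi*t))\<rfloor> + phi (cis (2*pi*t)) = of_int \<lfloor>y - t\<rfloor> + t"
proof -
  obtain n::int where n: "phi (cis (2*pi*t)) = t + n" using phi_cis by blast
  have "\<lfloor>y - (t + of_int n)\<rfloor> = \<lfloor>y - t\<rfloor> - n"
    by (metis diff_diff_eq floor_diff_of_int)
  then show ?thesis unfolding n by simp
qed

lemma sum_if_le:
  assumes "k < N"
  shows "(\<Sum>j<N. if j \<le> k then (0::real) else -1) = - real (N - 1 - k)"
proof -
  have "(\<Sum>j<N. if j \<le> k then (0::real) else -1) = (\<Sum>j\<in>{k<..<N}. -1)"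
    by (rule sum.mono_neutral_cong_right) auto
  then show ?thesis by simp
qed

lemma sum_if_less:
  assumes "k < N"
  shows "(\<Sum>j<N. if j < k then (0::real) else -1) = - real (N - k)"
proof -
  have "(\<Sum>j<N. if j < k then (0::real) else -1) = (\<Sum>j\<in>{k..<N}. -1)"
    by (rule sum.mono_neutral_cong_right) auto
  then show ?thesis by simp
qed

lemma Phi_lower:
  assumes "win N w" "k < N"
  shows "(\<Sum>j<N. real_of_int \<lfloor>w k - w j\<rfloor>) \<ge> - real (N - 1 - k)"
proof -
  have "(\<Sum>j<N. if j \<le> k then (0::real) else -1) \<le> (\<Sum>j<N. real_of_int \<lfloor>w k - w j\<rfloor>)"
  proof (rule sum_mono)
    fix j assume j: "j \<in> {..<N}"
    show "(if j \<le> k then (0::real) else -1) \<le> real_of_int \<lfloor>w k - w j\<rfloor>"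
    proof (cases "j \<le> k")
      case True
      then have "w j \<le> w k" using assms j unfolding win_def by auto
      then show ?thesis using True by simp
    next
      case False
      have "w j \<le> w (N-1)" "w 0 \<le> w k" "w (N-1) \<le> w 0 + 1" using assms j unfolding win_def by auto
      then have "w k - w j \<ge> -1" by linarith
      then have "(-1::int) \<le> \<lfloor>w k - w j\<rfloor>" by (simp add: le_floor_iff)
      then have "real_of_int (-1) \<le> real_of_int \<lfloor>w k - w j\<rfloor>" by (simp only: of_int_le_iff)
      then show ?thesis using False by simp
    qed
  qed
  then show ?thesis using sum_if_le[OF assms(2)] by simp
qed

lemma Phi_upper:
  assumes "win N w" "k < N" "y < w k"
  shows "(\<Sum>j<N. real_of_int \<lfloor>y - w j\<rfloor>) \<le> - real (N - k)"
proof -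
  have "(\<Sum>j<N. real_of_int \<lfloor>y - w j\<rfloor>) \<le> (\<Sum>j<N. if j < k then (0::real) else -1)"
  proof (rule sum_mono)
    fix j assume j: "j \<in> {..<N}"
    show "real_of_int \<lfloor>y - w j\<rfloor> \<le> (if j < k then (0::real) else -1)"
    proof (cases "j < k")
      case True
      have "w k \<le> w (N-1)" "w 0 \<le> w j" "w (N-1) \<le> w 0 + 1" using assms j unfolding win_def by auto
      then have "y - w j < 1" using assms(3) by linarith
      then have "\<lfloor>y - w j\<rfloor> < 1" by (simp add: floor_less_iff)
      then show ?thesis using True by simp
    next
      case False
      then have "w k \<le> w j" using assms j unfolding win_def by auto
      then have "y - w j < 0" using assms(3) by linarith
      then have "\<lfloor>y - w j\<rfloor> < 0" by (simp add: floor_less_iff)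
      then have "\<lfloor>y - w j\<rfloor> \<le> -1" by linarith
      then have "real_of_int \<lfloor>y - w j\<rfloor> \<le> real_of_int (-1)" by (simp only: of_int_le_iff)
      then show ?thesis using False by simp
    qed
  qed
  then show ?thesis using sum_if_less[OF assms(2)] by simp
qed

lemma Phi_eq:
  assumes "(\<Sum>k<N. w k) = (\<Sum>k<N. w' k)" "RM N w = RM N w'"
  shows "(\<Sum>j<N. real_of_int \<lfloor>y - w j\<rfloor>) = (\<Sum>j<N. real_of_int \<lfloor>y - w' j\<rfloor>)"
proof -
  define H where "H z = real_of_int \<lfloor>y - phi z\<rfloor> + phi z" for z
  have "sum_mset (image_mset H (RM N v)) = (\<Sum>j<N. real_of_int \<lfloor>y - v j\<rfloor>) + (\<Sum>k<N. v k)" for v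
    unfolding RM_def image_sum_single sum_mset_sum_single H_def H_cis
    by (simp add: sum.distrib)
  from this[of w] this[of w'] assms show ?thesis by simp
qed

lemma win_unique:
  assumes "win N w" "win N w'" "(\<Sum>k<N. w k) = (\<Sum>k<N. w' k)" "RM N w = RM N w'" "k < N"
  shows "w k = w' k"
proof -
  have a: "w k \<le> w' k" if "win N w" "win N w'" "(\<Sum>k<N. w k) = (\<Sum>k<N. w' k)" "RM N w = RM N w'"
    for w w'
  proof (rule ccontr)
    assume "\<not> w k \<le> w' k"
    then have "w' k < w k" by simp
    have "(\<Sum>j<N. real_of_int \<lfloor>w' k - w j\<rfloor>) \<le> - real (N - k)"
      by (rule Phi_upper) (use that assms(5) \<open>w' k < w k\<close> in auto)
    moreover have "(\<Sum>j<N. real_of_int \<lfloor>w' k - w' j\<rfloor>) \<ge> - real (N - 1 - k)"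
      by (rule Phi_lower) (use that assms(5) in auto)
    moreover have "(\<Sum>j<N. real_of_int \<lfloor>w' k - w j\<rfloor>) = (\<Sum>j<N. real_of_int \<lfloor>w' k - w' j\<rfloor>)"
      by (rule Phi_eq) (use that in auto)
    ultimately show False using assms(5) by linarith
  qed
  show ?thesis using a[of w w'] a[of w' w] assms by fastforce
qed


lemma shift_sum:
  fixes f :: "int \<Rightarrow> 'a::comm_monoid_add"
  shows "f r + (\<Sum>k<N. f (int k + (r+1))) = (\<Sum>k<N. f (int k + r)) + f (int N + r)"
proof -
  have "(\<Sum>k<Suc N. f (int k + r)) = f r + (\<Sum>k<N. f (int k + (r+1)))"
    by (subst sum.lessThan_Suc_shift) (simp add: algebra_simps)
  moreover have "(\<Sum>k<Suc N. f (int k + r)) = (\<Sum>k<N. f (int k + r)) + f (int N + r)"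
    by simp
  ultimately show ?thesis by simp
qed

lemma RM_rotate:
  assumes N: "N \<ge> 1" and u: "win N u"
  shows "\<exists>w. win N w \<and> (\<Sum>k<N. w k) = (\<Sum>k<N. u k) + of_int r \<and> RM N w = RM N u"
proof -
  define U where "U i = u (nat (i mod int N)) + real_of_int (i div int N)" for i :: int
  have Npos: "int N > 0" using N by simp
  have Uk: "U (int k) = u k" if "k < N" for k
    using that by (simp add: U_def div_pos_pos_trivial mod_pos_pos_trivial)
  have UN: "U (int N + i) = U i + 1" for i
  proof -
    have "(int N + i) mod int N = i mod int N" by simp
    moreover have "(int N + i) div int N = i div int N + 1" using Npos by simp
    ultimately show ?thesis by (simp add: U_def)
  qed
  have Umono: "U i \<le> U i'" if "i \<le> i'" for i i'
  proof -
    define q where "q = i div int N"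
    define q' where "q' = i' div int N"
    define m where "m = i mod int N"
    define m' where "m' = i' mod int N"
    have qq: "q \<le> q'" unfolding q_def q'_def using zdiv_mono1[OF that Npos] .
    have m: "0 \<le> m" "m < int N" "0 \<le> m'" "m' < int N" using Npos by (auto simp: m_def m'_def)
    have i: "i = q * int N + m" "i' = q' * int N + m'" by (simp_all add: q_def m_def q'_def m'_def)
    have uw: "\<And>a b. a \<le> b \<Longrightarrow> b < N \<Longrightarrow> u a \<le> u b" "u (N-1) \<le> u 0 + 1"
      using u unfolding win_def by auto
    show ?thesis
    proof (cases "q = q'")
      case True
      then have "m \<le> m'" using i that by simp
      then have "u (nat m) \<le> u (nat m')" using uw(1)[of "nat m" "nat m'"] m by auto
      then show ?thesis using True by (simp add: U_def q_def q'_def m_def m'_def)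
    next
      case False
      then have "q + 1 \<le> q'" using qq by simp
      have "u (nat m) \<le> u (N-1)" using uw(1)[of "nat m" "N-1"] m N by auto
      moreover have "u 0 \<le> u (nat m')" using uw(1)[of 0 "nat m'"] m by auto
      ultimately have "u (nat m) \<le> u (nat m') + 1" using uw(2) by linarith
      moreover have "real_of_int q + 1 \<le> real_of_int q'" using \<open>q + 1 \<le> q'\<close> by linarith
      ultimately show ?thesis by (simp add: U_def q_def q'_def m_def m'_def)
    qed
  qed
  have Ucis: "cis (2*pi*U (int N + i)) = cis (2*pi*U i)" for i
    by (simp add: UN distrib_left cis_mult[symmetric])
  define S where "S r = (\<Sum>k<N. U (int k + r))" for r
  define R where "R r = (\<Sum>k<N. {# cis (2*pi*U (int k + r)) #})" for r
  have Sstep: "S (r+1) = S r + 1" for r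
    using shift_sum[of U r N] UN[of r] unfolding S_def by (simp add: algebra_simps)
  have Rstep: "R (r+1) = R r" for r
  proof -
    have "{# cis (2*pi*U r) #} + R (r+1) = R r + {# cis (2*pi*U (int N + r)) #}"
      using shift_sum[of "\<lambda>i. {# cis (2*pi*U i) #}" r N] unfolding R_def by simp
    then show ?thesis unfolding Ucis by (simp add: add.commute)
  qed
  have SR: "S r = S 0 + of_int r \<and> R r = R 0"
  proof (induction r rule: int_induct[where k=0])
    case base
    then show ?case by simp
  next
    case (step1 i)
    then show ?case using Sstep[of i] Rstep[of i] by simp
  next
    case (step2 i)
    then show ?case using Sstep[of "i-1"] Rstep[of "i-1"] by simp
  qed
  have S0: "S 0 = (\<Sum>k<N. u k)" unfolding S_def by (simp add: Uk)
  have R0: "R 0 = RM N u" unfolding R_def RM_def by (simp add: Uk)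
  define w where "w k = U (int k + r)" for k
  have "win N w"
    unfolding win_def
  proof (intro conjI allI impI)
    fix i j assume "i \<le> j" "j < N"
    then show "w i \<le> w j" unfolding w_def by (intro Umono) simp
  next
    have "w (N-1) \<le> U (int N + r)" unfolding w_def by (intro Umono) simp
    then show "w (N - 1) \<le> w 0 + 1" using UN[of r] unfolding w_def by simp
  qed
  moreover have "(\<Sum>k<N. w k) = (\<Sum>k<N. u k) + of_int r"
    using SR S0 unfolding S_def w_def by simp
  moreover have "RM N w = RM N u"
    using SR R0 unfolding R_def RM_def w_def by simp
  ultimately show ?thesis by blast
qed


lemma mset_nth_sum: "mset L = (\<Sum>k<length L. {# L ! k #})"
proof (induction L)
  case Nil
  then show ?case by simp
next
  case (Cons x L)
  then show ?case by (simp add: sum.lessThan_Suc_shift del: sum.lessThan_Suc)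
qed

lemma cis_sum: "(\<Prod>k<(N::nat). cis (f k)) = cis (\<Sum>k<N. f k)"
  by (induction N) (auto simp: cis_mult)

lemma prod_uminus: "prod_mset (image_mset uminus M) = (-1) ^ size M * prod_mset (M :: complex multiset)"
  by (induction M) auto

lemma phi_bounds: "- 1/2 < phi z \<and> phi z \<le> 1/2"
proof -
  have "- pi < Arg z" "Arg z \<le> pi" using Arg_bounded by auto
  then show ?thesis unfolding phi_def by (auto simp: field_simps)
qed

lemma m1_cis: "(-1::complex)^N = cis (real N * pi)"
  using Complex.DeMoivre[of pi N] by simp

lemma exists_win:
  assumes N: "N \<ge> 1" and sz: "size M = N" and nm: "\<forall>z\<in>#M. cmod z = 1"
    and pr: "prod_mset (image_mset uminus M) = 1"
  shows "\<exists>w. win N w \<and> (\<Sum>k<N. w k) = real N / 2 \<and> RM N w = M"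
proof -
  define L where "L = sorted_list_of_multiset (image_mset phi M)"
  define u where "u k = L ! k" for k
  have mL: "mset L = image_mset phi M" unfolding L_def by simp
  have lenL: "length L = N" using arg_cong[OF mL, of size] sz by simp
  have sL: "sorted L" unfolding L_def by simp
  have RMu: "RM N u = M"
  proof -
    have "RM N u = image_mset (\<lambda>x. cis (2*pi*x)) (mset L)"
      unfolding RM_def u_def mset_nth_sum lenL image_sum_single by simp
    also have "\<dots> = image_mset (\<lambda>z. cis (2*pi*phi z)) M" unfolding mL by (simp add: multiset.map_comp comp_def)
    also have "\<dots> = M" using nm by (simp add: cis_phi multiset.map_ident_strong)
    finally show ?thesis .
  qed
  have "win N u"
    unfolding win_def
  proof (intro conjI allI impI)
    fix i j assume "i \<le> j" "j < N"
    then show "u i \<le> u j" unfolding u_def using sorted_nth_mono[OF sL] lenL by auto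
  next
    have "L ! (N-1) \<in> set L" "L ! 0 \<in> set L" using lenL N by auto
    then have "L ! (N-1) \<in> phi ` set_mset M" "L ! 0 \<in> phi ` set_mset M"
      using mL by (metis set_image_mset set_mset_mset)+
    then obtain z1 z0 where "L ! (N-1) = phi z1" "L ! 0 = phi z0" by blast
    then show "u (N - 1) \<le> u 0 + 1" unfolding u_def using phi_bounds[of z1] phi_bounds[of z0] by linarith
  qed
  define tot where "tot = (\<Sum>k<N. u k)"
  have "cis (2*pi * tot) = prod_mset (RM N u)"
    unfolding tot_def RM_def prod_mset_sum_single cis_sum by (simp add: sum_distrib_left)
  also have "\<dots> = prod_mset M" using RMu by simp
  also have "\<dots> = (-1)^N"
  proof -
    have "(-1)^N * prod_mset M = (1::complex)" using pr prod_uminus[of M] sz by simp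
    then have "(-1)^N * ((-1)^N * prod_mset M) = (-1::complex)^N" by simp
    then show ?thesis by (simp add: power_mult_distrib[symmetric] mult.assoc[symmetric])
  qed
  also have "\<dots> = cis (real N * pi)" by (rule m1_cis)
  finally obtain n :: int where "2*pi * tot = real N * pi + 2*pi*n" using cis_eq_shift by blast
  then have "pi * (2 * tot) = pi * (real N + 2 * n)" by (simp add: algebra_simps)
  then have "2 * tot = real N + 2 * n" using pi_neq_zero by (metis mult_cancel_left)
  then have sn: "tot = real N / 2 + n" by simp
  obtain w where "win N w" "(\<Sum>k<N. w k) = (\<Sum>k<N. u k) + of_int (-n)" "RM N w = RM N u"
    using RM_rotate[OF N \<open>win N u\<close>, of "-n"] by blast
  then show ?thesis using sn RMu unfolding tot_def by (intro exI[of _ w]) simp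
qed


definition wt :: "nat \<Rightarrow> (nat \<Rightarrow> real) \<Rightarrow> nat \<Rightarrow> real" where
  "wt N d k = 1/2 - (\<Sum>i<N. \<Sum>j\<in>{1..i}. d j) / real N + (\<Sum>j\<in>{1..k}. d j)"

lemma wt_sum: "N \<ge> 1 \<Longrightarrow> (\<Sum>k<N. wt N d k) = real N / 2"
proof -
  assume "N \<ge> 1"
  define A where "A = (\<Sum>i<N. \<Sum>j\<in>{1..i}. d j)"
  have "(\<Sum>k<N. wt N d k) = (\<Sum>k<N. (1/2 - A / real N) + (\<Sum>j\<in>{1..k}. d j))"
    by (simp add: wt_def A_def)
  also have "\<dots> = real N * (1/2 - A / real N) + A" by (simp add: sum.distrib A_def)
  also have "\<dots> = real N / 2" using \<open>N \<ge> 1\<close> by (simp add: field_simps)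
  finally show ?thesis .
qed

lemma wt_diff: "j \<ge> 1 \<Longrightarrow> wt N d j - wt N d (j-1) = d j"
proof -
  assume "j \<ge> 1"
  then obtain j' where "j = Suc j'" by (cases j) auto
  then show ?thesis by (simp add: wt_def sum.cl_ivl_Suc)
qed

lemma telescope: "(\<Sum>j\<in>{1..(k::nat)}. w j - w (j-1)) = (w k - w 0 :: real)"
  by (induction k) (auto simp: sum.cl_ivl_Suc)

lemma wt_win:
  assumes "N \<ge> 1" "\<forall>j\<in>{1..N-1}. d j \<ge> 0" "(\<Sum>j\<in>{1..N-1}. d j) \<le> 1"
  shows "win N (wt N d)"
  unfolding win_def
proof (intro conjI allI impI)
  fix i j assume ij: "i \<le> j" "j < N"
  have "(\<Sum>l\<in>{1..i}. d l) \<le> (\<Sum>l\<in>{1..j}. d l)"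
    by (rule sum_mono2) (use assms ij in auto)
  then show "wt N d i \<le> wt N d j" by (simp add: wt_def)
next
  have "wt N d (N - 1) - wt N d 0 = (\<Sum>j\<in>{1..N-1}. d j)" by (simp add: wt_def)
  then show "wt N d (N - 1) \<le> wt N d 0 + 1" using assms(3) by linarith
qed

lemma wt_of_win:
  assumes "N \<ge> 1" "(\<Sum>k<N. w k) = real N / 2" "\<forall>j\<in>{1..N-1}. d j = w j - w (j-1)" "k < N"
  shows "wt N d k = w k"
proof -
  have tk: "(\<Sum>j\<in>{1..k}. d j) = w k - w 0" if "k < N" for k
  proof -
    have "(\<Sum>j\<in>{1..k}. d j) = (\<Sum>j\<in>{1..k}. w j - w (j-1))"
      by (rule sum.cong) (use assms(3) that in auto)
    then show ?thesis using telescope[where k=k and w=w] by simp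
  qed
  have "(\<Sum>i<N. \<Sum>j\<in>{1..i}. d j) = (\<Sum>i<N. w i - w 0)" by (rule sum.cong[OF refl], rule tk) simp
  also have "\<dots> = real N / 2 - real N * w 0" using assms(2) by (simp add: sum_subtractf)
  finally have "(\<Sum>i<N. \<Sum>j\<in>{1..i}. d j) / real N = 1/2 - w 0" using assms(1) by (simp add: field_simps)
  then show ?thesis using tk[OF assms(4)] by (simp add: wt_def)
qed

lemma RM_cong: "(\<forall>k<N. w k = w' k) \<Longrightarrow> RM N w = RM N w'"
  unfolding RM_def by simp

lemma RM_prod1:
  assumes "(\<Sum>k<N. w k) = real N / 2"
  shows "prod_mset (image_mset uminus (RM N w)) = 1"
proof -
  have "prod_mset (RM N w) = cis (2*pi * (\<Sum>k<N. w k))"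
    unfolding RM_def prod_mset_sum_single cis_sum by (simp add: sum_distrib_left)
  also have "\<dots> = cis (real N * pi)" by (subst assms) (simp add: mult.commute)
  also have "\<dots> = (-1)^N" by (rule m1_cis[symmetric])
  finally have "prod_mset (RM N w) = (-1)^N" .
  then show ?thesis by (simp add: prod_uminus power_mult_distrib[symmetric])
qed

lemma cont_coeff_prod:
  assumes "finite A" "\<forall>k\<in>A. continuous_on U (f k)"
  shows "continuous_on U (\<lambda>g. coeff (\<Prod>k\<in>A. lin (f k g)) n)"
  using assms
proof (induction A arbitrary: n rule: finite_induct)
  case empty
  then show ?case by (simp add: coeff_1 continuous_on_const)
next
  case (insert a A)
  have eq: "coeff (lin z * P) n = (case n of 0 \<Rightarrow> 0 | Suc m \<Rightarrow> coeff P m) - z * coeff P n" for z P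
    by (simp add: lin_def algebra_simps coeff_pCons)
  have c: "continuous_on U (\<lambda>g. coeff (\<Prod>k\<in>A. lin (f k g)) m)" for m
    using insert by auto
  have ca: "continuous_on U (f a)" using insert by auto
  show ?case using insert(1,2)
    apply (simp add: eq)
    apply (cases n)
     apply (auto intro!: continuous_intros c ca)
    done
qed


definition Dom :: "(real^'n) set" where
  "Dom = {g. (\<forall>i. 0 \<le> g$i) \<and> (\<Sum>i\<in>UNIV. g$i) \<le> 1}"

lemma Dom_convex: "convex (Dom :: (real^'n) set)"
  unfolding convex_def Dom_def
proof (intro ballI allI impI, safe)
  fix x y :: "real^'n" and u v :: real and i
  assume "\<forall>i. 0 \<le> x $ i" "(\<Sum>i\<in>UNIV. x $ i) \<le> 1" "\<forall>i. 0 \<le> y $ i" "(\<Sum>i\<in>UNIV. y $ i) \<le> 1"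
    "0 \<le> u" "0 \<le> v" "u + v = 1"
  then show "0 \<le> (u *\<^sub>R x + v *\<^sub>R y) $ i" by simp
  have "(\<Sum>i\<in>UNIV. (u *\<^sub>R x + v *\<^sub>R y) $ i) = u * (\<Sum>i\<in>UNIV. x $ i) + v * (\<Sum>i\<in>UNIV. y $ i)"
    by (simp add: sum.distrib sum_distrib_left)
  also have "\<dots> \<le> u * 1 + v * 1"
    using \<open>0 \<le> u\<close> \<open>0 \<le> v\<close> \<open>(\<Sum>i\<in>UNIV. x $ i) \<le> 1\<close> \<open>(\<Sum>i\<in>UNIV. y $ i) \<le> 1\<close>
    by (intro add_mono mult_left_mono) auto
  finally show "(\<Sum>i\<in>UNIV. (u *\<^sub>R x + v *\<^sub>R y) $ i) \<le> 1" using \<open>u + v = 1\<close> by simp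
qed

lemma Dom_compact: "compact (Dom :: (real^'n) set)"
proof -
  have "Dom = (\<Inter>i. {g::real^'n. 0 \<le> g$i}) \<inter> {g. (\<Sum>i\<in>UNIV. g$i) \<le> 1}"
    unfolding Dom_def by auto
  moreover have "closed (\<Inter>i. {g::real^'n. 0 \<le> g$i})"
    by (intro closed_INT ballI closed_Collect_le continuous_intros)
  moreover have "closed {g::real^'n. (\<Sum>i\<in>UNIV. g$i) \<le> 1}"
    by (intro closed_Collect_le continuous_intros)
  ultimately have "closed (Dom :: (real^'n) set)" by (metis closed_Int)
  moreover have "bounded (Dom :: (real^'n) set)"
    unfolding bounded_iff
  proof (intro exI ballI)
    fix x :: "real^'n" assume "x \<in> Dom"
    then have "(\<Sum>i\<in>UNIV. \<bar>x$i\<bar>) = (\<Sum>i\<in>UNIV. x$i)" "(\<Sum>i\<in>UNIV. x$i) \<le> 1"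
      unfolding Dom_def by auto
    then show "norm x \<le> 1" using norm_le_l1_cart[of x] by linarith
  qed
  ultimately show ?thesis by (simp add: compact_eq_bounded_closed)
qed

lemma Dom_interior: "interior (Dom :: (real^'n) set) \<noteq> {}"
proof -
  define r where "r = 1 / (2 * real CARD('n))"
  have r: "r > 0" unfolding r_def by simp
  define c where "c = (\<chi> i. r :: real^'n)"
  have "ball c r \<subseteq> Dom"
  proof
    fix y assume "y \<in> ball c r"
    then have d: "norm (c - y) < r" by (simp add: dist_norm)
    have cy: "\<bar>y$i - r\<bar> < r" for i
      using component_le_norm_cart[of "c - y" i] d unfolding c_def by simp
    have "0 \<le> y$i" for i using cy[of i] by (auto simp: abs_less_iff)
    moreover have "y$i \<le> 2 * r" for i using cy[of i] by (auto simp: abs_less_iff)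
    then have "(\<Sum>i\<in>UNIV. y$i) \<le> (\<Sum>i\<in>(UNIV::'n set). 2 * r)"
      by (intro sum_mono) auto
    moreover have "(\<Sum>i\<in>(UNIV::'n set). 2 * r) = 1" unfolding r_def by simp
    ultimately show "y \<in> Dom" unfolding Dom_def by auto
  qed
  then have "c \<in> interior Dom" using r mem_interior by blast
  then show ?thesis by auto
qed

lemma Dom_homeo: "(Dom :: (real^'n) set) homeomorphic cball (0::real^'n) 1"
  by (rule homeomorphic_convex_compact_cball[OF Dom_convex Dom_compact Dom_interior]) simp


definition cfv :: "nat \<Rightarrow> (nat \<Rightarrow> real) \<Rightarrow> nat \<Rightarrow> complex" where
  "cfv N d n = coeff (PM (RM N (wt N d))) (N - n)"

definition Fm :: "nat \<Rightarrow> (nat \<Rightarrow> 'n) \<Rightarrow> real^'n \<Rightarrow> real^'n" where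
  "Fm N e g = (\<chi> i. Avec N (cfv N (\<lambda>j. g $ e j)) (inv_into {1..N-1} e i))"

lemma Avec_cong:
  assumes "\<forall>n\<in>{1..N-1}. c n = c' n" "j \<in> {1..N-1}"
  shows "Avec N c j = Avec N c' j"
proof -
  have "N - j \<in> {1..N-1}" using assms(2) by auto
  then show ?thesis using assms by (simp add: Avec_def)
qed

lemma PM_facts:
  assumes N: "N \<ge> 1" and s: "(\<Sum>k<N. w k) = real N / 2"
  defines "P \<equiv> PM (RM N w)"
  shows "degree P = N" "coeff P 0 = 1" "coeff P N = 1"
    "\<forall>n\<in>{1..N-1}. coeff P n = cnj (coeff P (N - n))"
    "\<forall>z. poly P z = 0 \<longrightarrow> cmod z = 1"
proof -
  have pr: "prod_mset (image_mset uminus (RM N w)) = 1" by (rule RM_prod1[OF s])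
  have nm: "\<forall>z\<in>#RM N w. cmod z = 1" using RM_norm by blast
  show "degree P = N" unfolding P_def by (simp add: degree_PM)
  show "coeff P 0 = 1" unfolding P_def using pr by (simp add: coeff0_PM)
  show "coeff P N = 1" unfolding P_def using lead_PM[of "RM N w"] by simp
  show "\<forall>n\<in>{1..N-1}. coeff P n = cnj (coeff P (N - n))"
  proof
    fix n assume n: "n \<in> {1..N-1}"
    have "coeff P (size (RM N w) - (N - n)) = cnj (coeff P (N - n))"
      unfolding P_def by (rule PM_selfinv[OF nm pr]) simp
    moreover have "size (RM N w) - (N - n) = n" using n by auto
    ultimately show "coeff P n = cnj (coeff P (N - n))" by simp
  qed
  show "\<forall>z. poly P z = 0 \<longrightarrow> cmod z = 1"
  proof (intro allI impI)
    fix z assume "poly P z = 0"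
    then have "z \<in> set_mset (proots P)" using PM_nz unfolding P_def by simp
    then have "z \<in># RM N w" unfolding P_def proots_PM .
    then show "cmod z = 1" by (rule RM_norm)
  qed
qed

lemma cfv_mirror:
  assumes N: "N \<ge> 1"
  shows "\<forall>n\<in>{1..N-1}. cfv N d (N - n) = cnj (cfv N d n)"
proof
  fix n assume n: "n \<in> {1..N-1}"
  have "\<forall>n\<in>{1..N-1}. coeff (PM (RM N (wt N d))) n = cnj (coeff (PM (RM N (wt N d))) (N - n))"
    using PM_facts(4)[OF N wt_sum[OF N]] by simp
  then have "coeff (PM (RM N (wt N d))) n = cnj (coeff (PM (RM N (wt N d))) (N - n))" using n by blast
  moreover have "N - (N - n) = n" using n by auto
  ultimately show "cfv N d (N - n) = cnj (cfv N d n)" unfolding cfv_def by simp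
qed

lemma apoly_Fm:
  assumes N: "N \<ge> 1" and e: "bij_betw e {1..N - 1} (UNIV :: 'n set)"
  shows "apoly N (\<lambda>j. Fm N e g $ e j) z = poly (PM (RM N (wt N (\<lambda>j. (g::real^'n) $ e j)))) z"
proof -
  define d where "d = (\<lambda>j. g $ e j)"
  define P where "P = PM (RM N (wt N d))"
  have inj: "inj_on e {1..N-1}" using e by (simp add: bij_betw_def)
  have Fe: "Fm N e g $ e j = Avec N (cfv N d) j" if "j \<in> {1..N-1}" for j
    unfolding Fm_def d_def using inv_into_f_f[OF inj that] by simp
  have "cvec N (\<lambda>j. Fm N e g $ e j) n = coeff P (N - n)" if n: "n \<in> {1..N-1}" for n
  proof -
    have "cvec N (\<lambda>j. Fm N e g $ e j) n = cvec N (Avec N (cfv N d)) n"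
      by (rule cvec_cong) (use Fe n in auto)
    also have "\<dots> = cfv N d n" by (rule cvec_Avec[OF cfv_mirror[OF N] n])
    finally show ?thesis unfolding cfv_def P_def .
  qed
  moreover have "degree P = N" "coeff P 0 = 1" "coeff P N = 1"
    unfolding P_def using PM_facts[OF N wt_sum[OF N]] by auto
  ultimately have "apoly N (\<lambda>j. Fm N e g $ e j) z = poly P z"
    by (intro apoly_eq_poly N) auto
  then show ?thesis unfolding P_def d_def .
qed

lemma Fm_in_W:
  assumes N: "N \<ge> 1" and e: "bij_betw e {1..N - 1} (UNIV :: 'n set)"
  shows "Fm N e (g::real^'n) \<in> W N e"
  unfolding W_def
proof (intro CollectI allI impI)
  fix z assume "apoly N (\<lambda>j. Fm N e g $ e j) z = 0"
  then have "poly (PM (RM N (wt N (\<lambda>j. g $ e j)))) z = 0" using apoly_Fm[OF N e] by simp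
  then show "cmod z = 1" using PM_facts(5)[OF N wt_sum[OF N]] by blast
qed

lemma cont_cfv: "continuous_on UNIV (\<lambda>g::real^'n. cfv N (\<lambda>j. g $ e j) m)"
proof -
  have eq: "cfv N (\<lambda>j. g $ e j) m = coeff (\<Prod>k\<in>{..<N}. lin (cis (2*pi * wt N (\<lambda>j. g $ e j) k))) (N - m)"
    for g :: "real^'n"
    unfolding cfv_def RM_def PM_sum_single by simp
  have "continuous_on UNIV (\<lambda>g::real^'n. cis (2*pi * wt N (\<lambda>j. g $ e j) k))" for k
    unfolding wt_def divide_inverse by (intro continuous_intros)
  then show ?thesis unfolding eq by (intro cont_coeff_prod) auto
qed

lemma cont_Fm: "continuous_on UNIV (Fm N e :: real^'n \<Rightarrow> real^'n)"
proof -
  have "continuous_on UNIV (\<lambda>g::real^'n. Avec N (cfv N (\<lambda>j. g $ e j)) j)" for j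
  proof (cases "2*j < N")
    case True
    then show ?thesis unfolding Avec_def by (simp add: continuous_intros cont_cfv)
  next
    case False
    then show ?thesis unfolding Avec_def by (cases "2*j = N") (simp_all add: continuous_intros cont_cfv)
  qed
  then show ?thesis unfolding Fm_def by (intro continuous_on_vec_lambda)
qed


theorem theorem1:
  fixes N :: nat and e :: "nat \<Rightarrow> 'n::finite"
  assumes "N \<ge> 2"
    and "bij_betw e {1..N - 1} (UNIV :: 'n set)"
  shows "W N e homeomorphic cball (0 :: real ^ 'n) 1"
proof -
  have N: "N \<ge> 1" using assms(1) by simp
  note e = assms(2)
  have inj: "inj_on e {1..N-1}" using e by (simp add: bij_betw_def)
  have surj: "e ` {1..N-1} = UNIV" using e by (simp add: bij_betw_def)
  have ie: "inv_into {1..N-1} e (e j) = j" if "j \<in> {1..N-1}" for j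
    using inv_into_f_f[OF inj that] .
  have ei: "e (inv_into {1..N-1} e i) = i" for i
    using f_inv_into_f[of i e "{1..N-1}"] surj by simp
  have iin: "inv_into {1..N-1} e i \<in> {1..N-1}" for i
    using inv_into_into[of i e "{1..N-1}"] surj by simp
  have sumg: "(\<Sum>i\<in>UNIV. g$i) = (\<Sum>j\<in>{1..N-1}. g $ e j)" for g :: "real^'n"
    using sum.reindex_bij_betw[OF e, of "\<lambda>i. g$i"] by simp
  have Fe: "Fm N e g $ e j = Avec N (cfv N (\<lambda>j. g $ e j)) j" if "j \<in> {1..N-1}" for j and g :: "real^'n"
    unfolding Fm_def using ie[OF that] by simp
  have winD: "win N (wt N (\<lambda>j. g $ e j))" if "g \<in> Dom" for g :: "real^'n"
  proof (rule wt_win[OF N])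
    show "\<forall>j\<in>{1..N - 1}. 0 \<le> g $ e j" using that unfolding Dom_def by auto
    show "(\<Sum>j\<in>{1..N-1}. g $ e j) \<le> 1" using that sumg[of g] unfolding Dom_def by auto
  qed
  have "Fm N e ` Dom \<subseteq> W N e" using Fm_in_W[OF N e] by blast
  moreover have "W N e \<subseteq> Fm N e ` Dom"
  proof
    fix x assume xW: "x \<in> W N e"
    define a where "a = (\<lambda>j. x $ e j)"
    obtain p where p: "degree p = N" "coeff p 0 = 1" "coeff p N = 1"
      "\<forall>n\<in>{1..N-1}. coeff p (N-n) = cvec N a n"
      using exists_poly[OF N, of a] by blast
    have pnz: "p \<noteq> 0" using p(3) by auto
    have ap: "apoly N a z = poly p z" for z
      by (rule apoly_eq_poly) (use N p in auto)
    define M where "M = proots p"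
    have pM: "PM M = p"
    proof -
      have "smult (lead_coeff p) (\<Prod>x\<in>#proots p. [:-x, 1:]) = p"
        by (rule complex_poly_decompose_multiset)
      then show ?thesis using p unfolding M_def PM_def lin_def by simp
    qed
    have sz: "size M = N" unfolding M_def using size_proots_complex p(1) by simp
    have nm: "\<forall>z\<in>#M. cmod z = 1"
    proof
      fix z assume "z \<in># M"
      then have "poly p z = 0" using pnz unfolding M_def by simp
      then have "apoly N a z = 0" using ap by simp
      then show "cmod z = 1" using xW unfolding W_def a_def by blast
    qed
    have pr: "prod_mset (image_mset uminus M) = 1"
      using coeff0_PM[of M] pM p(2) by simp
    obtain w where w: "win N w" "(\<Sum>k<N. w k) = real N / 2" "RM N w = M"
      using exists_win[OF N sz nm pr] by blast
    define g :: "real^'n" where "g = (\<chi> i. w (inv_into {1..N-1} e i) - w (inv_into {1..N-1} e i - 1))"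
    have dg: "g $ e j = w j - w (j - 1)" if "j \<in> {1..N-1}" for j
      unfolding g_def using ie[OF that] by simp
    have "g \<in> Dom"
      unfolding Dom_def
    proof (intro CollectI conjI allI)
      fix i
      have "inv_into {1..N-1} e i - 1 \<le> inv_into {1..N-1} e i" "inv_into {1..N-1} e i < N"
        using iin[of i] by auto
      then show "0 \<le> g $ i" using w(1) unfolding g_def win_def by simp
    next
      have "(\<Sum>i\<in>UNIV. g$i) = (\<Sum>j\<in>{1..N-1}. w j - w (j - 1))"
        unfolding sumg by (rule sum.cong) (use dg in auto)
      also have "\<dots> = w (N-1) - w 0" by (rule telescope)
      finally show "(\<Sum>i\<in>UNIV. g$i) \<le> 1" using w(1) unfolding win_def by simp
    qed
    have wtw: "wt N (\<lambda>j. g $ e j) k = w k" if "k < N" for k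
      by (rule wt_of_win[OF N w(2)]) (use dg that in auto)
    have RMg: "RM N (wt N (\<lambda>j. g $ e j)) = M"
      using RM_cong[of N "wt N (\<lambda>j. g $ e j)" w] wtw w(3) by simp
    have cf: "cfv N (\<lambda>j. g $ e j) n = cvec N a n" if "n \<in> {1..N-1}" for n
      unfolding cfv_def RMg pM using p(4) that by simp
    have "Fm N e g = x"
    proof (subst vec_eq_iff, intro allI)
      fix i
      have "Fm N e g $ i = Avec N (cfv N (\<lambda>j. g $ e j)) (inv_into {1..N-1} e i)"
        unfolding Fm_def by simp
      also have "\<dots> = Avec N (cvec N a) (inv_into {1..N-1} e i)"
        by (rule Avec_cong) (use cf iin in auto)
      also have "\<dots> = a (inv_into {1..N-1} e i)" by (rule Avec_cvec[OF iin])
      also have "\<dots> = x $ i" unfolding a_def ei ..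
      finally show "Fm N e g $ i = x $ i" .
    qed
    then show "x \<in> Fm N e ` Dom" using \<open>g \<in> Dom\<close> by blast
  qed
  ultimately have img: "Fm N e ` Dom = W N e" by blast
  have injF: "inj_on (Fm N e) Dom"
  proof (rule inj_onI)
    fix g g' :: "real^'n"
    assume g: "g \<in> Dom" and g': "g' \<in> Dom" and eq: "Fm N e g = Fm N e g'"
    define d where "d = (\<lambda>j. g $ e j)"
    define d' where "d' = (\<lambda>j. g' $ e j)"
    define P where "P = PM (RM N (wt N d))"
    define P' where "P' = PM (RM N (wt N d'))"
    have AA: "Avec N (cfv N d) j = Avec N (cfv N d') j" if "j \<in> {1..N-1}" for j
      using Fe[OF that, of g] Fe[OF that, of g'] eq unfolding d_def d'_def by simp
    have cc: "cfv N d n = cfv N d' n" if n: "n \<in> {1..N-1}" for n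
    proof -
      have "cfv N d n = cvec N (Avec N (cfv N d)) n" by (rule cvec_Avec[OF cfv_mirror[OF N] n, symmetric])
      also have "\<dots> = cvec N (Avec N (cfv N d')) n" by (rule cvec_cong) (use AA n in auto)
      also have "\<dots> = cfv N d' n" by (rule cvec_Avec[OF cfv_mirror[OF N] n])
      finally show ?thesis .
    qed
    have fP: "degree P = N" "coeff P 0 = 1" "coeff P N = 1"
      unfolding P_def using PM_facts[OF N wt_sum[OF N]] by auto
    have fP': "degree P' = N" "coeff P' 0 = 1" "coeff P' N = 1"
      unfolding P'_def using PM_facts[OF N wt_sum[OF N]] by auto
    have "P = P'"
    proof (rule poly_eqI)
      fix m
      consider "m = 0" | "m = N" | "m > N" | "m \<in> {1..N-1}" by force
      then show "coeff P m = coeff P' m"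
      proof cases
        case 3
        then show ?thesis using fP fP' by (simp add: coeff_eq_0)
      next
        case 4
        then have "N - m \<in> {1..N-1}" "N - (N - m) = m" by auto
        then show ?thesis using cc[of "N - m"] unfolding cfv_def P_def P'_def by simp
      qed (use fP fP' in auto)
    qed
    then have RMe: "RM N (wt N d) = RM N (wt N d')"
      unfolding P_def P'_def by (metis proots_PM)
    have wd: "win N (wt N d)" unfolding d_def by (rule winD[OF g])
    have wd': "win N (wt N d')" unfolding d'_def by (rule winD[OF g'])
    have ww: "wt N d k = wt N d' k" if "k < N" for k
      by (rule win_unique[OF wd wd' _ RMe that]) (simp add: wt_sum[OF N])
    have "d j = d' j" if "j \<in> {1..N-1}" for j
    proof -
      have "j - 1 < N" "j < N" "j \<ge> 1" using that by auto
      then show ?thesis using wt_diff[of j N d] wt_diff[of j N d'] ww by metis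
    qed
    then show "g = g'"
      unfolding d_def d'_def vec_eq_iff by (metis ei iin)
  qed
  obtain h where "homeomorphism Dom (W N e) (Fm N e) h"
    using homeomorphism_compact[OF Dom_compact continuous_on_subset[OF cont_Fm] img injF] by blast
  then have "(Dom :: (real^'n) set) homeomorphic W N e" unfolding homeomorphic_def by (intro exI)
  then show ?thesis using Dom_homeo homeomorphic_sym homeomorphic_trans by blast
qed

end
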